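(* Let $g(v;a)=v(1-v)(v-a)$, $k>0$, $a\in(0,1)$, $v_i=\frac{a+1}{3}$, and $A\in(v_i,1)$. Put $u_{tp}=\frac12(1+a-A)$. Then $u_{tp}\in(\frac a2,v_i)$, $$d^\diamond(A;a)=\frac{-3A^2+2(a+1)A+(a-1)^2}{4(k+1)}>0,$$ and the line $v\mapsto d^\diamond(A;a)(k+1)(A-v)-g(A;a)$ touches the graph of $v\mapsto -g(v;a)$ tangentially at $v=u_{tp}$ (equal values and equal derivatives there).
   Context: $d^\diamond(A;a)=\inf\{d>0:\ d(k+1)(A-v)-g(A;a)\ge -g(v;a)\ \text{for all }v\in[0,A]\}$. *)

theory Defs
  imports Complex_Main
begin

definition g :: "real \<Rightarrow> real \<Rightarrow> real" where
  "g v a = v * (1 - v) * (v - a)"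

definition d_diamond :: "real \<Rightarrow> real \<Rightarrow> real \<Rightarrow> real" where
  "d_diamond k A a = Inf {d. d > 0 \<and> (\<forall>v\<in>{0..A}. d * (k + 1) * (A - v) - g A a \<ge> - g v a)}"

end

theory Submission
  imports Defs
begin

theorem lemma7p1:
  fixes k a A :: real
  assumes "k > 0" and "0 < a" and "a < 1"
    and "(a + 1) / 3 < A" and "A < 1"
  defines "u \<equiv> (1 + a - A) / 2"
  shows "(a / 2 < u \<and> u < (a + 1) / 3)
    \<and> d_diamond k A a = (-3 * A^2 + 2 * (a + 1) * A + (a - 1)^2) / (4 * (k + 1))
    \<and> d_diamond k A a > 0
    \<and> d_diamond k A a * (k + 1) * (A - u) - g A a = - g u a
    \<and> ((\<lambda>v. d_diamond k A a * (k + 1) * (A - v) - g A a)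
            has_real_derivative (- (d_diamond k A a * (k + 1)))) (at u)
    \<and> ((\<lambda>v. - g v a) has_real_derivative (- (d_diamond k A a * (k + 1)))) (at u)"
proof -
  define M where "M = -3 * A^2 + 2 * (a + 1) * A + (a - 1)^2"
  define D where "D = M / (4 * (k + 1))"
  define q where "q v = -(A^2 + A*v + v^2) + (1+a)*(A+v) - a" for v
  have k1: "k + 1 > 0" using assms by simp
  have Mpos: "M > 0"
  proof -
    have "M = (1 - A) * (3*A + 1 - 2*a) + a^2 + (A - (a+1)/3) * 0"
      unfolding M_def by (simp add: algebra_simps power2_eq_square)
    moreover have "(1 - A) * (3*A + 1 - 2*a) > 0" using assms by (intro mult_pos_pos) auto
    ultimately show ?thesis using assms by (smt (verit) zero_less_power)
  qed
  have Dpos: "D > 0" unfolding D_def using Mpos k1 by simp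
  have qv: "q v = M/4 - (v - u)^2" for v
    unfolding q_def M_def u_def by (simp add: field_simps power2_eq_square)
  have key: "c * (A - v) - g A a + g v a = (A - v) * (c - q v)" for c v
    unfolding g_def q_def by (simp add: algebra_simps power2_eq_square)
  have uA: "u < A" using assms unfolding u_def by simp
  have u0: "0 \<le> u" using assms unfolding u_def by simp
  have DK: "D * (k + 1) = M / 4" unfolding D_def using k1 by (simp add: field_simps)
  have set_eq: "{d. d > 0 \<and> (\<forall>v\<in>{0..A}. d * (k + 1) * (A - v) - g A a \<ge> - g v a)} = {D..}"
  proof (intro set_eqI iffI)
    fix d assume "d \<in> {d. d > 0 \<and> (\<forall>v\<in>{0..A}. d * (k + 1) * (A - v) - g A a \<ge> - g v a)}"
    then have "d * (k + 1) * (A - u) - g A a \<ge> - g u a" using u0 uA by auto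
    then have "(A - u) * (d * (k+1) - q u) \<ge> 0" using key[of "d*(k+1)" u] by linarith
    then have "d * (k+1) - q u \<ge> 0" using uA by (simp add: zero_le_mult_iff)
    then have "d * (k+1) \<ge> D * (k+1)" using qv[of u] DK by simp
    then show "d \<in> {D..}" using k1 by simp
  next
    fix d assume d: "d \<in> {D..}"
    then have dD: "d * (k+1) \<ge> D * (k+1)" using k1 by (simp add: mult_right_mono)
    have "\<forall>v\<in>{0..A}. d * (k + 1) * (A - v) - g A a \<ge> - g v a"
    proof
      fix v assume v: "v \<in> {0..A}"
      have "d * (k+1) - q v \<ge> 0" using dD DK qv[of v] by (smt (verit) zero_le_power2)
      then have "(A - v) * (d * (k+1) - q v) \<ge> 0" using v by simp
      then show "d * (k + 1) * (A - v) - g A a \<ge> - g v a" using key[of "d*(k+1)" v] by linarith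
    qed
    then show "d \<in> {d. d > 0 \<and> (\<forall>v\<in>{0..A}. d * (k + 1) * (A - v) - g A a \<ge> - g v a)}"
      using d Dpos by auto
  qed
  have dd: "d_diamond k A a = D" unfolding d_diamond_def set_eq by simp
  have p1: "a / 2 < u \<and> u < (a + 1) / 3" using assms unfolding u_def by simp
  have p4: "D * (k + 1) * (A - u) - g A a = - g u a"
    using key[of "D*(k+1)" u] qv[of u] unfolding DK by simp
  have p5: "((\<lambda>v. D * (k + 1) * (A - v) - g A a)
            has_real_derivative (- (D * (k + 1)))) (at u)"
    by (auto intro!: derivative_eq_intros)
  have p6: "((\<lambda>v. - g v a) has_real_derivative (- (D * (k + 1)))) (at u)"
  proof -
    have "((\<lambda>v. - (v * (1 - v) * (v - a))) has_real_derivative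
       (- ((1 * (1 - u) + u * (0 - 1)) * (u - a) + u * (1 - u) * (1 - 0)))) (at u)"
      by (auto intro!: derivative_eq_intros)
    moreover have "- ((1 * (1 - u) + u * (0 - 1)) * (u - a) + u * (1 - u) * (1 - 0)) = - (D * (k + 1))"
      unfolding DK M_def u_def by (simp add: field_simps power2_eq_square)
    ultimately show ?thesis unfolding g_def by simp
  qed
  show ?thesis using p1 p4 p5 p6 Dpos unfolding dd D_def M_def by simp
qed

end
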